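(* A filtered vector space $(V,\ell)$ satisfies the best approximation property if and only if $\ell(V\setminus\{0\})$ is a well-ordered subset of $\mathbb{R}$.
   Context: A filtered vector space over a field $\kappa$ is a pair $(V,\ell)$ with $V$ a $\kappa$-vector space and $\ell\colon V\to\mathbb{R}\cup\{-\infty\}$ such that $\ell(v)=-\infty$ iff $v=0$, $\ell(cv)=\ell(v)$ for $c\in\kappa\setminus\{0\}$, and $\ell(v+w)\le\max\{\ell(v),\ell(w)\}$. $(V,\ell)$ satisfies the best approximation property if for every proper subspace $W\subsetneq V$ and every $v\in V\setminus W$ there is $w_0\in W$ with $\ell(v-w_0)\le\ell(v-w)$ for all $w\in W$. *)

theory Defs
  imports Main "HOL-Library.Extended_Real"
begin

text \<open>A filtered vector space: the whole type 'v is a vector space over the field 'k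
  (scalar multiplication scale), and l takes values in the reals together with -infinity
  (modelled in ereal, never +infinity).\<close>
definition filtered_vector_space ::
  "('k::field \<Rightarrow> 'v::ab_group_add \<Rightarrow> 'v) \<Rightarrow> ('v \<Rightarrow> ereal) \<Rightarrow> bool" where
  "filtered_vector_space scale l \<longleftrightarrow>
     vector_space scale \<and>
     (\<forall>v. l v \<noteq> \<infinity>) \<and>
     (\<forall>v. l v = -\<infinity> \<longleftrightarrow> v = 0) \<and>
     (\<forall>c v. c \<noteq> 0 \<longrightarrow> l (scale c v) = l v) \<and>
     (\<forall>v w. l (v + w) \<le> max (l v) (l w))"

definition best_approximation_property ::
  "('k::field \<Rightarrow> 'v::ab_group_add \<Rightarrow> 'v) \<Rightarrow> ('v \<Rightarrow> ereal) \<Rightarrow> bool" where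
  "best_approximation_property scale l \<longleftrightarrow>
     (\<forall>W. module.subspace scale W \<and> W \<noteq> UNIV \<longrightarrow>
        (\<forall>v. v \<notin> W \<longrightarrow> (\<exists>w0\<in>W. \<forall>w\<in>W. l (v - w0) \<le> l (v - w))))"

definition well_ordered_real_set :: "real set \<Rightarrow> bool" where
  "well_ordered_real_set S \<longleftrightarrow>
     (\<forall>T. T \<subseteq> S \<and> T \<noteq> {} \<longrightarrow> (\<exists>m\<in>T. \<forall>t\<in>T. m \<le> t))"

end

theory Submission
  imports Defs
begin

locale fvs = vector_space scale for scale :: "'k::field \<Rightarrow> 'v::ab_group_add \<Rightarrow> 'v" +
  fixes l :: "'v \<Rightarrow> ereal"
  assumes fin: "l v \<noteq> \<infinity>"
    and zer: "l v = -\<infinity> \<longleftrightarrow> v = 0"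
    and sc: "c \<noteq> 0 \<Longrightarrow> l (scale c v) = l v"
    and ultra: "l (v + w) \<le> max (l v) (l w)"
begin

lemma lneg: "l (- v) = l v"
proof -
  have "l (scale (-1) v) = l v" by (rule sc) simp
  then show ?thesis by simp
qed

lemma strict1: assumes "l a < l b" shows "l (a + b) = l b"
proof -
  have "l (a + b) \<le> l b" using ultra[of a b] assms by simp
  moreover have "l b \<le> max (l (a + b)) (l (- a))"
    using ultra[of "a + b" "- a"] by (simp add: algebra_simps)
  then have "l b \<le> l (a + b)" using assms lneg[of a] by (auto simp: max_def split: if_splits)
  ultimately show ?thesis by simp
qed

lemma strict: assumes "l a \<noteq> l b" shows "l (a + b) = l a \<or> l (a + b) = l b"
proof (cases "l a < l b")
  case True then show ?thesis using strict1 by blast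
next
  case False
  then have "l b < l a" using assms by auto
  then show ?thesis using strict1[of b a] by (simp add: add.commute)
qed

lemma key:
  assumes "finite F"
    and "\<forall>m\<in>F. \<forall>n\<in>F. m \<noteq> n \<longrightarrow> l (x m) \<noteq> l (x n)"
    and "\<exists>n\<in>F. c n \<noteq> 0"
  shows "\<exists>n\<in>F. c n \<noteq> 0 \<and> l (\<Sum>k\<in>F. scale (c k) (x k)) = l (x n)"
  using assms
proof (induction F rule: finite_induct)
  case empty
  then show ?case by simp
next
  case (insert a F)
  have sum: "(\<Sum>k\<in>insert a F. scale (c k) (x k)) = scale (c a) (x a) + (\<Sum>k\<in>F. scale (c k) (x k))"
    using insert.hyps by simp
  show ?case
  proof (cases "c a = 0")
    case True
    then have ex: "\<exists>n\<in>F. c n \<noteq> 0" using insert.prems by auto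
    have "\<exists>n\<in>F. c n \<noteq> 0 \<and> l (\<Sum>k\<in>F. scale (c k) (x k)) = l (x n)"
      using insert.IH insert.prems ex by auto
    then show ?thesis using sum True by auto
  next
    case ca: False
    show ?thesis
    proof (cases "\<exists>n\<in>F. c n \<noteq> 0")
      case False
      then have "(\<Sum>k\<in>F. scale (c k) (x k)) = 0" by (intro sum.neutral) auto
      then show ?thesis using sum ca sc by auto
    next
      case True
      then obtain n where n: "n \<in> F" "c n \<noteq> 0" "l (\<Sum>k\<in>F. scale (c k) (x k)) = l (x n)"
        using insert.IH insert.prems by auto
      have "n \<noteq> a" using n insert.hyps by auto
      then have "l (x a) \<noteq> l (x n)" using insert.prems(1) n by auto
      then have "l (scale (c a) (x a)) \<noteq> l (\<Sum>k\<in>F. scale (c k) (x k))" using n sc ca by simp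
      from strict[OF this] show ?thesis using n sc[OF ca] sum ca by auto
    qed
  qed
qed

end

lemma dd: "(a::'a::ab_group_add) - (b - c) = a - b + c" by (simp add: algebra_simps)

lemma fvs_of: assumes "filtered_vector_space scale l" shows "fvs scale l"
proof -
  have a: "vector_space scale" "\<forall>v. l v \<noteq> \<infinity>" "\<forall>v. l v = -\<infinity> \<longleftrightarrow> v = 0"
    "\<forall>c v. c \<noteq> 0 \<longrightarrow> l (scale c v) = l v" "\<forall>v w. l (v + w) \<le> max (l v) (l w)"
    using assms unfolding filtered_vector_space_def by simp_all
  show ?thesis unfolding fvs_def fvs_axioms_def
  proof (intro conjI allI impI)
    show "vector_space scale" by (fact a(1))
  qed (use a in auto)
qed

theorem proposition3p5:
  fixes scale :: "'k::field \<Rightarrow> 'v::ab_group_add \<Rightarrow> 'v" and l :: "'v \<Rightarrow> ereal"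
  assumes "filtered_vector_space scale l"
  shows "best_approximation_property scale l \<longleftrightarrow>
         well_ordered_real_set {r. \<exists>v. v \<noteq> 0 \<and> l v = ereal r}"
proof -
  interpret fvs scale l using fvs_of[OF assms] .
  let ?S = "{r. \<exists>v. v \<noteq> 0 \<and> l v = ereal r}"
  have real: "\<exists>r. l v = ereal r" if "v \<noteq> 0" for v
    using fin[of v] zer[of v] that by (cases "l v") auto
  show ?thesis
  proof
    assume wo: "well_ordered_real_set ?S"
    show "best_approximation_property scale l"
      unfolding best_approximation_property_def
    proof (intro allI impI)
      fix W v assume W: "subspace W \<and> W \<noteq> UNIV" and v: "v \<notin> W"
      let ?T = "{r. \<exists>w\<in>W. l (v - w) = ereal r}"
      have nz: "v - w \<noteq> 0" if "w \<in> W" for w using that v by auto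
      have "?T \<subseteq> ?S"
      proof
        fix t assume "t \<in> ?T"
        then obtain w where "w \<in> W" "l (v - w) = ereal t" by blast
        then show "t \<in> ?S" using nz[of w] by blast
      qed
      moreover have "?T \<noteq> {}"
      proof -
        have 0: "0 \<in> W" using W subspace_0 by blast
        obtain t where "l (v - 0) = ereal t" using real[OF nz[OF 0]] by blast
        then have "t \<in> ?T" using 0 by blast
        then show ?thesis by blast
      qed
      moreover have "?T \<subseteq> ?S \<and> ?T \<noteq> {} \<longrightarrow> (\<exists>m\<in>?T. \<forall>t\<in>?T. m \<le> t)"
        using wo unfolding well_ordered_real_set_def by (elim allE[where x="?T"])
      ultimately have "\<exists>m\<in>?T. \<forall>t\<in>?T. m \<le> t"
        by (metis (no_types, lifting))
      then obtain m where m: "m \<in> ?T" "\<forall>t\<in>?T. m \<le> t" by blast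
      then obtain w0 where w0: "w0 \<in> W" "l (v - w0) = ereal m" by blast
      show "\<exists>w0\<in>W. \<forall>w\<in>W. l (v - w0) \<le> l (v - w)"
      proof (intro bexI[OF _ w0(1)] ballI)
        fix w assume w: "w \<in> W"
        then obtain t where t: "l (v - w) = ereal t" using real[OF nz[OF w]] by blast
        then have "m \<le> t" using m w by blast
        then show "l (v - w0) \<le> l (v - w)" using t w0 by simp
      qed
    qed
  next
    assume bap: "best_approximation_property scale l"
    show "well_ordered_real_set ?S"
      unfolding well_ordered_real_set_def
    proof (rule ccontr)
      assume "\<not> (\<forall>T. T \<subseteq> ?S \<and> T \<noteq> {} \<longrightarrow> (\<exists>m\<in>T. \<forall>t\<in>T. m \<le> t))"
      then obtain T where T: "T \<subseteq> ?S" "T \<noteq> {}" and nol0: "\<not> (\<exists>m\<in>T. \<forall>t\<in>T. m \<le> t)"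
        by blast
      have nol: "\<forall>m\<in>T. \<exists>t\<in>T. t < m"
      proof
        fix m assume "m \<in> T"
        then obtain t where "t \<in> T" "\<not> m \<le> t" using nol0 by blast
        then show "\<exists>t\<in>T. t < m" by (auto simp: not_le)
      qed
      have "\<exists>f. \<forall>m\<in>T. f m \<in> T \<and> f m < m" by (rule bchoice) (use nol in blast)
      then obtain f where f: "\<forall>m\<in>T. f m \<in> T \<and> f m < m" by blast
      obtain t0 where t0: "t0 \<in> T" using T by blast
      define r where "r n = (f ^^ n) t0" for n
      have rT: "r n \<in> T" for n by (induction n) (auto simp: r_def t0 f)
      have rdec: "r (Suc n) < r n" for n using f rT[of n] by (simp add: r_def)
      have rlt: "r n < r m" if "m < n" for m n
        using that
      proof (induction n)
        case 0 then show ?case by simp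
      next
        case (Suc n) then show ?case using rdec[of n] by (cases "m = n") auto
      qed
      have rle: "r n \<le> r m" if "m \<le> n" for m n
        using rlt[of m n] that by (cases "m = n") auto
      have rinj: "r m \<noteq> r n" if "m \<noteq> n" for m n
        using rlt[of m n] rlt[of n m] that by (cases "m < n") auto
      define x where "x n = (SOME v. v \<noteq> 0 \<and> l v = ereal (r n))" for n
      have x: "x n \<noteq> 0 \<and> l (x n) = ereal (r n)" for n
        unfolding x_def by (rule someI_ex) (use rT T in blast)
      have xinj: "x m \<noteq> x n" if "m \<noteq> n" for m n
        using x[of m] x[of n] rinj[OF that] by auto
      define g where "g n = x 0 - x n" for n
      define W where "W = span (g ` {0<..})"
      have ginj: "inj_on g {0<..}" unfolding inj_on_def g_def using xinj by auto
      have claim: "\<exists>N. ereal (r N) \<le> l (x 0 - w)" if w: "w \<in> W" for w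
      proof -
        obtain t u where tu: "finite t" "t \<subseteq> g ` {0<..}" "w = (\<Sum>a\<in>t. scale (u a) a)"
          using w unfolding W_def span_explicit by blast
        obtain F where F: "F \<subseteq> {0<..}" "finite F" "t = g ` F"
          using finite_subset_image[OF tu(1,2)] by blast
        define c where "c n = u (g n)" for n
        have injF: "inj_on g F" using ginj F(1) by (rule inj_on_subset)
        have "w = (\<Sum>n\<in>F. scale (c n) (g n))"
          using tu(3) F(3) sum.reindex[OF injF, of "\<lambda>a. scale (u a) a"] by (simp add: c_def)
        also have "\<dots> = (\<Sum>n\<in>F. scale (c n) (x 0) - scale (c n) (x n))"
          unfolding g_def by (simp only: scale_right_diff_distrib)
        also have "\<dots> = (\<Sum>n\<in>F. scale (c n) (x 0)) - (\<Sum>n\<in>F. scale (c n) (x n))"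
          by (rule sum_subtractf)
        also have "(\<Sum>n\<in>F. scale (c n) (x 0)) = scale (sum c F) (x 0)"
          by (rule scale_sum_left[symmetric])
        finally have wF: "w = scale (sum c F) (x 0) - (\<Sum>n\<in>F. scale (c n) (x n))" .
        define d where "d n = (if n = 0 then 1 - sum c F else c n)" for n
        have 0: "0 \<notin> F" using F(1) by auto
        have s1: "(\<Sum>n\<in>F. scale (d n) (x n)) = (\<Sum>n\<in>F. scale (c n) (x n))"
          using 0 by (intro sum.cong) (auto simp: d_def)
        have s2: "scale (d 0) (x 0) = x 0 - scale (sum c F) (x 0)"
          by (simp add: d_def scale_left_diff_distrib)
        have s3: "(\<Sum>n\<in>insert 0 F. scale (d n) (x n)) = scale (d 0) (x 0) + (\<Sum>n\<in>F. scale (d n) (x n))"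
          using 0 F(2) by (intro sum.insert)
        have dsum: "(\<Sum>n\<in>insert 0 F. scale (d n) (x n)) = x 0 - w"
        proof -
          have e: "x 0 - w = (x 0 - scale (sum c F) (x 0)) + (\<Sum>n\<in>F. scale (c n) (x n))"
            unfolding wF by (rule dd)
          have "scale (d 0) (x 0) + (\<Sum>n\<in>F. scale (d n) (x n)) = x 0 - w"
            by (subst s1, subst s2, rule e[symmetric])
          then show ?thesis by (rule trans[OF s3])
        qed
        have dnz: "\<exists>n\<in>insert 0 F. d n \<noteq> 0"
        proof (cases "\<exists>n\<in>F. c n \<noteq> 0")
          case True
          then obtain n where n: "n \<in> F" "c n \<noteq> 0" by blast
          have "n \<noteq> 0"
          proof
            assume "n = 0"
            then show False using n(1) 0 by simp
          qed
          then have "d n = c n" unfolding d_def by (rule if_not_P)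
          then have "d n \<noteq> 0" using n(2) by simp
          moreover have "n \<in> insert 0 F" using n(1) by simp
          ultimately show ?thesis by (rule bexI)
        next
          case False then have "sum c F = 0" by (intro sum.neutral) blast
          then have "d 0 = 1" unfolding d_def by simp
          then have "d 0 \<noteq> 0" by simp
          moreover have "(0::nat) \<in> insert 0 F" by simp
          ultimately show ?thesis by (rule bexI)
        qed
        have dist: "\<forall>m\<in>insert 0 F. \<forall>n\<in>insert 0 F. m \<noteq> n \<longrightarrow> l (x m) \<noteq> l (x n)"
        proof (intro ballI impI)
          fix m n :: nat assume "m \<noteq> n"
          then show "l (x m) \<noteq> l (x n)" using x[of m] x[of n] rinj[of m n] by simp
        qed
        obtain k where k: "k \<in> insert 0 F" "l (x 0 - w) = l (x k)"
          using key[OF _ dist dnz] F(2) dsum by auto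
        have "k \<le> Max (insert 0 F)" using k(1) F(2) by simp
        then have "r (Max (insert 0 F)) \<le> r k" by (rule rle)
        then show ?thesis using k x[of k] by auto
      qed
      have sW: "subspace W" unfolding W_def by simp
      have x0W: "x 0 \<notin> W"
      proof
        assume "x 0 \<in> W"
        then obtain N where "ereal (r N) \<le> l (x 0 - x 0)" using claim by blast
        then show False using zer[of 0] by simp
      qed
      then have "W \<noteq> UNIV" by auto
      then have "\<exists>w0\<in>W. \<forall>w\<in>W. l (x 0 - w0) \<le> l (x 0 - w)"
        using bap[unfolded best_approximation_property_def, rule_format, OF conjI[OF sW], of "x 0"] x0W
        by blast
      then obtain w0 where w0: "w0 \<in> W" "\<forall>w\<in>W. l (x 0 - w0) \<le> l (x 0 - w)" by blast
      obtain N where N: "ereal (r N) \<le> l (x 0 - w0)" using claim[OF w0(1)] by blast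
      have "g (Suc N) \<in> W" unfolding W_def by (rule span_base) simp
      then have "l (x 0 - w0) \<le> l (x 0 - g (Suc N))" using w0(2) by blast
      moreover have "x 0 - g (Suc N) = x (Suc N)" by (simp add: g_def)
      ultimately have "l (x 0 - w0) \<le> l (x (Suc N))" by simp
      then have "ereal (r N) \<le> ereal (r (Suc N))" using N x[of "Suc N"] by (metis order_trans)
      then have "r N \<le> r (Suc N)" by simp
      then show False using rdec[of N] by simp
    qed
  qed
qed

end
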